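(* Let $K,H$ be finite dimensional Hilbert spaces, $A\in B(K\otimes H)$ self-adjoint, and $y=\sum_{i=1}^k x_i\otimes y_i$ with $x_i\in K$, $y_i\in H$. Let $X=\mathrm{span}(x_1,\dots,x_k)$ and $Y=\mathrm{span}(y_1,\dots,y_k)$. Suppose $(Ay,y)=1$ and $Ay\notin X\otimes Y$. Then there exist a unit product vector $x=u\otimes v$ ($u\in K$, $v\in H$) with $x\perp X\otimes Y$ and $s\in(0,1)$ such that, with $t=(1-s^2)^{1/2}$, $$\big(A(sx+ty),\,sx+ty\big)>1.$$ *)

theory Defs
  imports "HOL-Analysis.Analysis"
begin

text \<open>Finite-dimensional complex Hilbert spaces K = C^'m, H = C^'n; K \<otimes> H = C^('m \<times> 'n).
  Operators on K \<otimes> H are matrices acting by (*v).\<close>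

definition cinner :: "complex^'i \<Rightarrow> complex^'i \<Rightarrow> complex" where
  "cinner z w = (\<Sum>i\<in>UNIV. z $ i * cnj (w $ i))"

definition tensor :: "complex^'m \<Rightarrow> complex^'n \<Rightarrow> complex^('m \<times> 'n)" where
  "tensor u v = (\<chi> p. u $ fst p * v $ snd p)"

definition self_adjoint :: "complex^'i^'i \<Rightarrow> bool" where
  "self_adjoint A \<longleftrightarrow> (\<forall>i j. A $ i $ j = cnj (A $ j $ i))"

definition tensor_subspace :: "(complex^'m) set \<Rightarrow> (complex^'n) set \<Rightarrow> (complex^('m \<times> 'n)) set" where
  "tensor_subspace X Y = vec.span {tensor a b | a b. a \<in> X \<and> b \<in> Y}"

end

theory Submission imports Defs begin

lemma cinner_add_left: "cinner (x + y) z = cinner x z + cinner y z"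
  by (simp add: cinner_def sum.distrib distrib_right)
lemma cinner_add_right: "cinner z (x + y) = cinner z x + cinner z y"
  by (simp add: cinner_def sum.distrib distrib_left)
lemma cinner_scale_left: "cinner (c *s x) z = c * cinner x z"
  by (simp add: cinner_def sum_distrib_left mult.assoc)
lemma cinner_scale_right: "cinner z (c *s x) = cnj c * cinner z x"
  by (simp add: cinner_def sum_distrib_left mult.assoc mult.left_commute)
lemma cinner_scaleR_left: "cinner (r *\<^sub>R x) z = of_real r * cinner x z"
  apply (simp only: cinner_def vector_scaleR_component)
  by (simp add: sum_distrib_left scaleR_conv_of_real mult.assoc)
lemma cinner_scaleR_right: "cinner z (r *\<^sub>R x) = of_real r * cinner z x"
  apply (simp only: cinner_def vector_scaleR_component)
  by (simp add: cinner_def sum_distrib_left scaleR_conv_of_real mult.assoc mult.left_commute)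
lemma cinner_cnj: "cinner x y = cnj (cinner y x)"
  by (simp add: cinner_def mult.commute)
lemma cinner_zero_right[simp]: "cinner x 0 = 0" by (simp add: cinner_def)
lemma cinner_self_zero: "cinner z z = 0 \<Longrightarrow> z = 0"
proof -
  assume h: "cinner z z = 0"
  have "(\<Sum>i\<in>UNIV. (cmod (z$i))\<^sup>2) = Re (cinner z z)"
    by (simp add: cinner_def complex_mult_cnj cmod_power2)
  then have "(\<Sum>i\<in>UNIV. (cmod (z$i))\<^sup>2) = 0" using h by simp
  then have "\<forall>i\<in>UNIV. (cmod (z$i))\<^sup>2 = 0" by (subst (asm) sum_nonneg_eq_0_iff) auto
  then have "\<forall>i. z$i = 0" by simp
  then show ?thesis by (metis vec_eq_iff zero_index)
qed
lemma inner_cinner: "inner x y = Re (cinner x (y::complex^'i))"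
  by (simp add: inner_vec_def cinner_def inner_complex_def Re_sum)
lemma mv_scaleR: "(A::complex^'a^'b) *v (r *\<^sub>R x) = r *\<^sub>R (A *v x)"
  apply (simp only: matrix_vector_mult_def vec_eq_iff vector_scaleR_component vec_lambda_beta)
  by (simp add: scaleR_conv_of_real sum_distrib_left mult.left_commute)
lemma sa_cinner: assumes "self_adjoint A" shows "cinner (A *v x) y = cinner x (A *v y)"
proof -
  have h: "cnj (A$j$i) = A$i$j" for i j using assms unfolding self_adjoint_def by metis
  have "cinner (A *v x) y = (\<Sum>i\<in>UNIV. \<Sum>j\<in>UNIV. A$i$j * x$j * cnj (y$i))"
    by (simp add: cinner_def matrix_vector_mult_def sum_distrib_right)
  also have "\<dots> = (\<Sum>j\<in>UNIV. \<Sum>i\<in>UNIV. A$i$j * x$j * cnj (y$i))"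
    by (rule sum.swap)
  also have "\<dots> = (\<Sum>j\<in>UNIV. \<Sum>i\<in>UNIV. x$j * cnj (A$j$i * y$i))"
  proof (intro sum.cong refl)
    fix i j
    have "x$j * cnj (A$j$i * y$i) = x$j * (A$i$j * cnj (y$i))" by (simp add: h)
    also have "\<dots> = A$i$j * x$j * cnj (y$i)" by (simp only: mult.assoc mult.left_commute)
    finally show "A$i$j * x$j * cnj (y$i) = x$j * cnj (A$j$i * y$i)" by (rule sym)
  qed
  also have "\<dots> = cinner x (A *v y)"
    by (simp add: cinner_def matrix_vector_mult_def sum_distrib_left)
  finally show ?thesis .
qed


lemma scaleR_vec_s: "(r *\<^sub>R x) = (complex_of_real r) *s (x::complex^'i)"
  apply (simp only: vec_eq_iff vector_scaleR_component vector_smult_component)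
  by (simp add: scaleR_conv_of_real)

lemma vsub_real: assumes "vec.subspace (S::(complex^'i) set)" shows "subspace S"
proof (rule subspaceI)
  show "0 \<in> S" using assms by (rule vec.subspace_0)
  show "x + y \<in> S" if "x \<in> S" "y \<in> S" for x y using assms that by (rule vec.subspace_add)
  show "c *\<^sub>R x \<in> S" if "x \<in> S" for c x unfolding scaleR_vec_s using assms that by (rule vec.subspace_scale)
qed

lemma cdecomp:
  fixes S :: "(complex^'i) set"
  assumes "vec.subspace S"
  obtains p q where "p \<in> S" "\<forall>s\<in>S. cinner q s = 0" "w = p + q"
proof -
  have sp: "span S = S" using vsub_real[OF assms] by (simp add: span_eq_iff)
  obtain p q where p: "p \<in> span S" and q: "\<And>s. s \<in> span S \<Longrightarrow> orthogonal q s" and e: "p + q = w"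
    using orthogonal_subspace_decomp_exists[of S w] by metis
  have "cinner q s = 0" if s: "s \<in> S" for s
  proof -
    have "\<i> *s s \<in> S" using assms s by (simp add: vec.subspace_scale)
    then have "Re (cinner q (\<i> *s s)) = 0" using q sp by (simp add: orthogonal_def inner_cinner)
    then have 1: "Im (cinner q s) = 0" by (simp add: cinner_scale_right)
    have "Re (cinner q s) = 0" using q sp s by (simp add: orthogonal_def inner_cinner)
    with 1 show ?thesis by (simp add: complex_eq_iff)
  qed
  then show ?thesis using that p sp e by auto
qed

lemma cinner_tensor: "cinner (tensor u v) (tensor a b) = cinner u a * cinner v b"
proof -
  have "cinner (tensor u v) (tensor a b) = (\<Sum>p\<in>UNIV \<times> UNIV. u $ fst p * v $ snd p * cnj (a $ fst p * b $ snd p))"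
    by (simp add: cinner_def tensor_def UNIV_Times_UNIV)
  also have "\<dots> = (\<Sum>i\<in>UNIV. \<Sum>j\<in>UNIV. (u $ i * cnj (a $ i)) * (v $ j * cnj (b $ j)))"
    by (simp add: sum.cartesian_product split_def mult_ac)
  also have "\<dots> = cinner u a * cinner v b"
    by (simp add: cinner_def sum_product)
  finally show ?thesis .
qed

lemma tensor_add_left: "tensor (a + b) c = tensor a c + tensor b c"
  by (simp add: tensor_def vec_eq_iff distrib_right)
lemma tensor_add_right: "tensor c (a + b) = tensor c a + tensor c b"
  by (simp add: tensor_def vec_eq_iff distrib_left)
lemma tensor_scale: "tensor (c *s a) b = c *s tensor a b"
  by (simp add: tensor_def vec_eq_iff mult.assoc)
lemma cinner_axis: "cinner z (tensor (axis i 1) (axis j 1)) = z $ (i, j)"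
proof -
  have "cinner z (tensor (axis i 1) (axis j 1)) = (\<Sum>p\<in>UNIV. if p = (i,j) then z $ p else 0)"
    unfolding cinner_def tensor_def by (intro sum.cong) (auto simp: axis_def)
  then show ?thesis by simp
qed

lemma orth_span:
  assumes "\<forall>s\<in>S. cinner x s = 0"
  shows "\<forall>s\<in>vec.span S. cinner x s = 0"
proof -
  have "vec.subspace {s. cinner x s = 0}"
    by (auto simp: vec.subspace_def cinner_add_right cinner_scale_right)
  then have "vec.span S \<subseteq> {s. cinner x s = 0}"
    using assms by (intro vec.span_minimal) auto
  then show ?thesis by auto
qed

lemma tensor_orth:
  assumes "(\<forall>a\<in>X. cinner u a = 0) \<or> (\<forall>b\<in>Y. cinner v b = 0)"
  shows "\<forall>w\<in>tensor_subspace X Y. cinner (tensor u v) w = 0"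
  unfolding tensor_subspace_def
  by (rule orth_span) (use assms in \<open>auto simp: cinner_tensor\<close>)

lemma norm_scale: "norm (c *s (x::complex^'i)) = cmod c * norm x"
  unfolding norm_vec_def
  by (simp add: L2_set_right_distrib norm_mult)

lemma final_ineq:
  fixes a \<beta> :: real
  assumes "\<beta> > 0"
  shows "\<exists>s. 0<s \<and> s<1 \<and> s\<^sup>2 * a + (sqrt(1-s\<^sup>2))\<^sup>2 + 2 * s * sqrt(1-s\<^sup>2) * \<beta> > 1"
proof -
  define s where "s = min (1/2) (\<beta> / (2*(\<bar>1-a\<bar>+1)))"
  have "0 < \<beta> / (2*(\<bar>1-a\<bar>+1))" using assms by (intro divide_pos_pos) (auto, smt (verit) abs_ge_zero)
  then have s0: "0 < s" by (simp add: s_def)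
  have s1: "s \<le> 1/2" unfolding s_def by (rule min.cobounded1)
  have sb: "s * (\<bar>1-a\<bar>+1) \<le> \<beta>/2"
  proof -
    have "s \<le> \<beta> / (2*(\<bar>1-a\<bar>+1))" by (simp add: s_def)
    moreover have D: "0 < 2*(\<bar>1-a\<bar>+1)" by (smt (verit) abs_ge_zero)
    ultimately have "s * (2*(\<bar>1-a\<bar>+1)) \<le> \<beta>" by (metis pos_le_divide_eq)
    then show ?thesis by (simp add: field_simps)
  qed
  have "s * s \<le> (1/2) * (1/2)" using s0 s1 by (intro mult_mono) auto
  then have ss: "s\<^sup>2 \<le> 1/4" by (simp add: power2_eq_square)
  define t where "t = sqrt (1 - s\<^sup>2)"
  have t2: "t\<^sup>2 = 1 - s\<^sup>2" using ss by (simp add: t_def)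
  have th: "t \<ge> 1/2"
  proof -
    have "sqrt (1/4) \<le> t" unfolding t_def using ss by (intro real_sqrt_le_mono) simp
    moreover have "sqrt (1/4::real) = 1/2" by (simp add: real_sqrt_divide)
    ultimately show ?thesis by simp
  qed
  have P: "s * (1 - a) \<le> s * (\<bar>1-a\<bar>+1)" using s0 by (intro mult_left_mono) auto
  have M: "\<beta> * 1 \<le> \<beta> * (2*t)" by (rule mult_left_mono) (use th assms in auto)
  have k0: "s * (1-a) < \<beta> * (2*t)" using P M sb assms by linarith
  then have k: "s * (1-a) < 2*t*\<beta>" by (simp add: mult_ac)
  have "s\<^sup>2 * a + t\<^sup>2 + 2 * s * t * \<beta> - 1 = s * (2 * t * \<beta> - s * (1-a))"
    using t2 by (simp add: power2_eq_square algebra_simps)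
  moreover have "s * (2 * t * \<beta> - s * (1-a)) > 0" using s0 k by simp
  ultimately show ?thesis using s0 s1 unfolding t_def by (intro exI[of _ s]) auto
qed

theorem lemma5:
  fixes A :: "complex^('m::finite \<times> 'n::finite)^('m \<times> 'n)"
    and xs :: "nat \<Rightarrow> complex^'m" and ys :: "nat \<Rightarrow> complex^'n" and k :: nat
    and y :: "complex^('m \<times> 'n)"
  assumes "self_adjoint A"
    and "y = (\<Sum>i<k. tensor (xs i) (ys i))"
    and "cinner (A *v y) y = 1"
    and "A *v y \<notin> tensor_subspace (vec.span (xs ` {..<k})) (vec.span (ys ` {..<k}))"
  shows "\<exists>u v s. norm (tensor u v) = 1
           \<and> (\<forall>z \<in> tensor_subspace (vec.span (xs ` {..<k})) (vec.span (ys ` {..<k})).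
                 cinner (tensor u v) z = 0)
           \<and> 0 < s \<and> s < 1
           \<and> (let t = sqrt (1 - s\<^sup>2); w = s *\<^sub>R tensor u v + t *\<^sub>R y
              in Re (cinner (A *v w) w) > 1)"
proof -
  define X where "X = vec.span (xs ` {..<k})"
  define Y where "Y = vec.span (ys ` {..<k})"
  define P where "P = tensor_subspace X Y"
  have sX: "vec.subspace X" and sY: "vec.subspace Y" and sP: "vec.subspace P"
    unfolding X_def Y_def P_def tensor_subspace_def by (auto intro: vec.subspace_span)
  obtain p z where p: "p \<in> P" and zo: "\<forall>s\<in>P. cinner z s = 0" and e: "A *v y = p + z"
    using cdecomp[OF sP] by metis
  have nP: "A *v y \<notin> P" using assms(4) unfolding P_def X_def Y_def .
  have "\<exists>u v. (\<forall>w\<in>P. cinner (tensor u v) w = 0) \<and> cinner z (tensor u v) \<noteq> 0"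
  proof (rule ccontr)
    assume H0: "\<not> ?thesis"
    have H: "cinner z (tensor u v) = 0" if "\<forall>w\<in>P. cinner (tensor u v) w = 0" for u v
      using H0 that by blast
    have "z $ ij = 0" for ij
    proof -
      obtain i j where ij: "ij = (i, j)" by (cases ij)
      obtain a b where a: "a \<in> X" and b: "\<forall>s\<in>X. cinner b s = 0" and eab: "axis i 1 = a + b"
        using cdecomp[OF sX] by metis
      obtain c d where c: "c \<in> Y" and d: "\<forall>s\<in>Y. cinner d s = 0" and ecd: "axis j 1 = c + d"
        using cdecomp[OF sY] by metis
      have "tensor a c \<in> P" unfolding P_def tensor_subspace_def
        using a c by (intro vec.span_base) blast
      then have 1: "cinner z (tensor a c) = 0" using zo by blast
      have 2: "cinner z (tensor a d) = 0" using d by (intro H) (unfold P_def, rule tensor_orth, blast)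
      have 3: "cinner z (tensor b c) = 0" using b by (intro H) (unfold P_def, rule tensor_orth, blast)
      have 4: "cinner z (tensor b d) = 0" using b by (intro H) (unfold P_def, rule tensor_orth, blast)
      have "z $ ij = cinner z (tensor (axis i 1) (axis j 1))" by (simp add: ij cinner_axis)
      also have "\<dots> = 0" unfolding eab ecd
        by (simp add: tensor_add_left tensor_add_right cinner_add_right 1 2 3 4)
      finally show ?thesis .
    qed
    then have "z = 0" by (simp add: vec_eq_iff)
    then have "A *v y \<in> P" using e p by simp
    with nP show False by simp
  qed
  then obtain u0 v where orth0: "\<forall>w\<in>P. cinner (tensor u0 v) w = 0"
    and nz: "cinner z (tensor u0 v) \<noteq> 0" by blast
  define x0 where "x0 = tensor u0 v"
  define c0 where "c0 = cinner (A *v y) x0"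
  have "cinner p x0 = 0" using orth0 p unfolding x0_def by (subst cinner_cnj) simp
  then have c0z: "c0 = cinner z x0" unfolding c0_def e by (simp add: cinner_add_left)
  then have c0nz: "c0 \<noteq> 0" using nz x0_def by simp
  have "x0 \<noteq> 0" using c0nz c0z by auto
  then have n0: "norm x0 > 0" by simp
  define lam where "lam = c0 / (of_real (cmod c0 * norm x0))"
  define u where "u = lam *s u0"
  define x where "x = tensor u v"
  have xe: "x = lam *s x0" unfolding x_def u_def x0_def by (simp add: tensor_scale)
  have nx: "norm x = 1" unfolding xe norm_scale lam_def using c0nz n0
    by (simp add: norm_divide norm_mult)
  have ox: "\<forall>w\<in>P. cinner x w = 0" using orth0 unfolding xe x0_def by (simp add: cinner_scale_left)
  have "cinner (A *v y) x = cnj lam * c0" unfolding xe c0_def by (simp add: cinner_scale_right)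
  also have "\<dots> = (c0 * cnj c0) / of_real (cmod c0 * norm x0)" unfolding lam_def
    by (simp add: mult.commute)
  also have "\<dots> = of_real ((cmod c0)\<^sup>2 / (cmod c0 * norm x0))"
    unfolding complex_norm_square[symmetric] by simp
  also have "\<dots> = of_real (cmod c0 / norm x0)" using c0nz n0
    by (simp add: power2_eq_square)
  finally have bx: "cinner (A *v y) x = of_real (cmod c0 / norm x0)" .
  define \<beta> where "\<beta> = Re (cinner (A *v y) x)"
  have \<beta>0: "\<beta> > 0" unfolding \<beta>_def bx using c0nz n0 by simp
  define a where "a = Re (cinner (A *v x) x)"
  obtain s where s0: "0 < s" and s1: "s < 1"
    and ineq: "s\<^sup>2 * a + (sqrt(1-s\<^sup>2))\<^sup>2 + 2 * s * sqrt(1-s\<^sup>2) * \<beta> > 1"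
    using final_ineq[OF \<beta>0] by blast
  define t where "t = sqrt (1 - s\<^sup>2)"
  define w where "w = s *\<^sub>R x + t *\<^sub>R y"
  have r1: "Re (cinner (A *v x) y) = \<beta>"
    unfolding \<beta>_def using sa_cinner[OF assms(1), of x y] cinner_cnj[of x "A *v y"] by simp
  have "Re (cinner (A *v w) w) = s\<^sup>2 * a + t\<^sup>2 * Re (cinner (A *v y) y) + s * t * Re (cinner (A *v x) y) + s * t * \<beta>"
    unfolding w_def a_def \<beta>_def
    by (simp add: matrix_vector_right_distrib mv_scaleR cinner_add_left cinner_add_right
        cinner_scaleR_left cinner_scaleR_right power2_eq_square algebra_simps)
  also have "\<dots> = s\<^sup>2 * a + t\<^sup>2 + 2 * s * t * \<beta>" using assms(3) r1 by simp
  finally have "Re (cinner (A *v w) w) > 1" using ineq unfolding t_def by simp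
  then show ?thesis
    using nx ox s0 s1 unfolding P_def X_def Y_def x_def w_def t_def Let_def by blast
qed

end
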